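(* Let $G=(V,E,\mu,\omega)$ be a weighted graph with a fixed reference vertex $p\in V$, and suppose there exist constants $D>0$ and $0\le\alpha\le2$ such that $\mathrm{Deg}(x)\le D\,d(x,p)^{\alpha}$ for all $x\in V$, $x\ne p$. Let $T\in(0,\infty]$ and let $u\in C^2_t([0,T)\times V)$ satisfy the homogeneous wave equation $\partial_t^2u(t,x)=\Delta u(t,x)$ for all $(t,x)\in[0,T)\times V$ (the time derivative at $t=0$ being one-sided). Suppose that for some $C>0$ and $A_1\in[0,2-\alpha]$, $$|u(t,x)|\le C\,d(x,p)^{A_1 d(x,p)}\quad\text{for all }(t,x)\in[0,T)\times V,\ x\ne p.$$ Then for every $x\in V$, the function $t\mapsto u(t,x)$ is real analytic on $[0,T)$, with radius of analyticity $r$ (i.e. for every $t_0\in[0,T)$ the Taylor series of $u(\cdot,x)$ at $t_0$ converges to $u(t,x)$ for all $t\in[0,T)$ with $|t-t_0|<r$) satisfying $r=+\infty$ if $A_1<2-\alpha$, and $r\ge\frac1e\sqrt{\frac{2}{D}}$ if $A_1=2-\alpha$.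
   Context: A weighted graph $G=(V,E,\mu,\omega)$ consists of a locally finite, connected, simple, undirected graph $(V,E)$, a symmetric edge weight $\omega:E\to(0,\infty)$, $\{x,y\}\mapsto\omega_{xy}=\omega_{yx}$, and a vertex weight $\mu:V\to(0,\infty)$. Write $x\sim y$ if $\{x,y\}\in E$; $d(x,y)$ is the combinatorial graph distance. The Laplacian is $\Delta f(x)=\sum_{y\sim x}\frac{\omega_{xy}}{\mu_x}(f(y)-f(x))$ for $f:V\to\mathbb{R}$, and the weighted degree is $\mathrm{Deg}(x)=\sum_{y\sim x}\frac{\omega_{xy}}{\mu_x}$. For an interval $I$ and $k\in\mathbb{N}_0\cup\{\infty\}$, $u\in C^k_t(I\times V)$ means $u:I\times V\to\mathbb{R}$ and $u(\cdot,x)\in C^k(I)$ for every $x\in V$; $\Delta$ acts in the space variable. *)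

theory Defs
  imports "HOL-Analysis.Analysis"
begin

text \<open>A weighted graph on the vertex type 'v (V = UNIV): adjacency relation adj,
 edge weight w (only its values on edges matter), vertex weight mu.\<close>
definition weighted_graph :: "('v \<Rightarrow> 'v \<Rightarrow> bool) \<Rightarrow> ('v \<Rightarrow> 'v \<Rightarrow> real) \<Rightarrow> ('v \<Rightarrow> real) \<Rightarrow> bool" where
  "weighted_graph adj w mu \<longleftrightarrow>
     (\<forall>x y. adj x y \<longrightarrow> adj y x) \<and>
     (\<forall>x. \<not> adj x x) \<and>
     (\<forall>x. finite {y. adj x y}) \<and>
     (\<forall>x y. adj\<^sup>*\<^sup>* x y) \<and>
     (\<forall>x y. adj x y \<longrightarrow> w x y = w y x \<and> w x y > 0) \<and>
     (\<forall>x. mu x > 0)"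

definition gdist :: "('v \<Rightarrow> 'v \<Rightarrow> bool) \<Rightarrow> 'v \<Rightarrow> 'v \<Rightarrow> nat" where
  "gdist adj x y = (LEAST n. (adj ^^ n) x y)"

definition laplacian :: "('v \<Rightarrow> 'v \<Rightarrow> bool) \<Rightarrow> ('v \<Rightarrow> 'v \<Rightarrow> real) \<Rightarrow> ('v \<Rightarrow> real) \<Rightarrow> ('v \<Rightarrow> real) \<Rightarrow> 'v \<Rightarrow> real" where
  "laplacian adj w mu f x = (\<Sum>y\<in>{y. adj x y}. w x y / mu x * (f y - f x))"

definition wdeg :: "('v \<Rightarrow> 'v \<Rightarrow> bool) \<Rightarrow> ('v \<Rightarrow> 'v \<Rightarrow> real) \<Rightarrow> ('v \<Rightarrow> real) \<Rightarrow> 'v \<Rightarrow> real" where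
  "wdeg adj w mu x = (\<Sum>y\<in>{y. adj x y}. w x y / mu x)"

definition tint :: "ereal \<Rightarrow> real set" where
  "tint T = {t. 0 \<le> t \<and> ereal t < T}"

end

theory Submission
  imports Defs "HOL-Real_Asymp.Real_Asymp"
begin


lemma lap_deriv:
  assumes "\<And>y. ((\<lambda>s. F s y) has_real_derivative F' y) (at t within S)"
  shows "((\<lambda>s. laplacian adj w mu (F s) x) has_real_derivative laplacian adj w mu F' x) (at t within S)"
  unfolding laplacian_def
  by (intro DERIV_sum DERIV_cmult DERIV_diff assms)

lemma lapk_deriv:
  assumes "\<And>y. ((\<lambda>s. F s y) has_real_derivative F' y) (at t within S)"
  shows "((\<lambda>s. (laplacian adj w mu ^^ k) (F s) x) has_real_derivative (laplacian adj w mu ^^ k) F' x) (at t within S)"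
proof (induction k arbitrary: x)
  case 0
  then show ?case using assms by simp
next
  case (Suc k)
  show ?case using lap_deriv[of "\<lambda>s. (laplacian adj w mu ^^ k) (F s)" "(laplacian adj w mu ^^ k) F'" t S adj w mu x, OF Suc]
    by simp
qed

lemma gdist_ex:
  assumes "adj\<^sup>*\<^sup>* x y"
  shows "(adj ^^ gdist adj x y) x y"
  unfolding gdist_def using rtranclp_imp_relpowp[OF assms] by (rule LeastI_ex)

lemma gdist_le: "(adj ^^ n) x y \<Longrightarrow> gdist adj x y \<le> n"
  unfolding gdist_def by (rule Least_le)

lemma gdist_adj:
  assumes "\<forall>x y. adj x y \<longrightarrow> adj y x" "\<forall>x y. adj\<^sup>*\<^sup>* x y" "adj y z"
  shows "gdist adj z p \<le> Suc (gdist adj y p)"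
proof -
  have "(adj ^^ gdist adj y p) y p" by (rule gdist_ex[OF assms(2)[rule_format]])
  moreover have "adj z y" by (rule assms(1)[rule_format, OF assms(3)])
  ultimately have "(adj ^^ Suc (gdist adj y p)) z p" by (rule relpowp_Suc_I2[rotated])
  then show ?thesis by (rule gdist_le)
qed

lemma gdist_0: "\<forall>x y. adj\<^sup>*\<^sup>* x y \<Longrightarrow> gdist adj x p = 0 \<longleftrightarrow> x = p"
proof
  assume "\<forall>x y. adj\<^sup>*\<^sup>* x y" "gdist adj x p = 0"
  then have "(adj ^^ 0) x p" using gdist_ex[of adj x p] by simp
  then show "x = p" by simp
next
  assume "x = p"
  then show "gdist adj x p = 0" using gdist_le[where adj=adj and n=0 and x=p and y=p] by simp
qed

lemma exp_ge_term: "0 \<le> x \<Longrightarrow> x^n / fact n \<le> exp (x::real)"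
proof -
  assume x: "0 \<le> x"
  have s: "(\<lambda>n. x^n / fact n) sums exp x" using exp_converges[of x] by (simp add: divide_inverse_commute)
  have "sum (\<lambda>n. x^n / fact n) {n} \<le> suminf (\<lambda>n. x^n / fact n)"
    by (rule sum_le_suminf) (use s x in \<open>auto simp: sums_iff\<close>)
  then show ?thesis using s by (simp add: sums_iff)
qed


lemma ratio_aux:
  fixes x n e \<alpha> bb c lm :: real
  assumes "1 \<le> c" "c \<le> x" "x \<le> n" "0 \<le> e" "0 \<le> \<alpha>" "0 \<le> bb" "lm \<le> c powr (\<alpha> + bb)" "\<alpha> + bb \<le> d"
  shows "lm * x powr e \<le> n powr (e + d)"
proof -
  have a: "x powr e \<le> n powr e" using assms by (intro powr_mono2) auto
  moreover have b: "c powr (\<alpha> + bb) \<le> n powr d"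
  proof -
    have "c powr (\<alpha> + bb) \<le> n powr (\<alpha> + bb)" using assms by (intro powr_mono2) auto
    also have "\<dots> \<le> n powr d" using assms by (intro powr_mono) auto
    finally show ?thesis .
  qed
  have "lm * x powr e \<le> n powr d * n powr e"
  proof (cases "lm \<ge> 0")
    case True
    then show ?thesis using a b assms(7) by (meson mult_mono order_trans powr_ge_zero)
  next
    case False
    then have "lm * x powr e \<le> 0" by (simp add: mult_nonpos_nonneg)
    then show ?thesis by (meson order_trans mult_nonneg_nonneg powr_ge_zero)
  qed
  then show ?thesis by (simp add: powr_add mult.commute)
qed


definition bnd :: "real \<Rightarrow> real \<Rightarrow> real \<Rightarrow> real \<Rightarrow> real \<Rightarrow> real \<Rightarrow> nat \<Rightarrow> nat \<Rightarrow> real" where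
  "bnd K D' lm c \<alpha> A1 k m = K * (2*D')^k * (if m = 0 then lm else 1) *
      (real m + real k + c) powr (\<alpha> * real k + A1 * (real m + real k + c))"

lemma mono_aux: "0 \<le> W \<Longrightarrow> W \<le> D \<Longrightarrow> 0 \<le> X \<Longrightarrow> X \<le> Y \<Longrightarrow> W * X \<le> D * (Y::real)"
  by (meson mult_mono order_trans)

lemma key_ineq:
  assumes D': "D' > 0" and c: "c \<ge> 1" and lam: "lm \<ge> 1" "lm \<le> c powr (\<alpha> + A1)"
    and al: "\<alpha> \<ge> 0" and A1: "A1 \<ge> 0" and K: "K \<ge> 0" and W: "W \<ge> 0"
    and mm: "m' \<le> Suc m" "m \<le> Suc m'"
    and Wb: "W \<le> (if m = 0 then D' * lm else D' * real m powr \<alpha>)"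
  shows "2 * W * bnd K D' lm c \<alpha> A1 k m' \<le> bnd K D' lm c \<alpha> A1 (Suc k) m"
proof -
  define n where "n = real m + real (Suc k) + c"
  define n' where "n' = real m' + real k + c"
  define E where "E = \<alpha> * real (Suc k) + A1 * n"
  define e' where "e' = \<alpha> * real k + A1 * n'"
  have n1: "n \<ge> 1" "n' \<ge> 1" "n' \<le> n" using c mm by (auto simp: n_def n'_def)
  have e'0: "e' \<ge> 0" using al A1 n1 by (simp add: e'_def)
  have Q: "W * ((if m' = 0 then lm else 1) * n' powr e') \<le> D' * ((if m = 0 then lm else 1) * n powr E)"
  proof (cases "m = 0")
    case True
    then have Wl: "W \<le> D' * lm" using Wb by simp
    show ?thesis
    proof (cases "m' = 0")
      case True
      have nn: "n = real k + 1 + c" "n' = real k + c" using \<open>m = 0\<close> True by (auto simp: n_def n'_def)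
      have "lm * n' powr e' \<le> n powr (e' + (\<alpha> + A1))"
        using nn c al A1 lam e'0 by (intro ratio_aux[where c=c and \<alpha>=\<alpha> and bb=A1]) auto
      also have "e' + (\<alpha> + A1) = E" using nn by (simp add: E_def e'_def algebra_simps)
      finally have "lm * n' powr e' \<le> n powr E" .
      then have "W * (lm * n' powr e') \<le> (D' * lm) * n powr E"
        using Wl W lam by (intro mono_aux) auto
      then show ?thesis using True \<open>m = 0\<close> by (simp add: mult.assoc)
    next
      case False
      then have nn: "n' = n" using \<open>m = 0\<close> mm by (auto simp: n_def n'_def)
      have "n powr e' \<le> n powr E" using n1 al A1 nn by (intro powr_mono) (auto simp: E_def e'_def intro: mult_left_mono)
      then have "W * n' powr e' \<le> (D' * lm) * n powr E"
        using Wl W nn by (intro mono_aux) auto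
      then show ?thesis using False \<open>m = 0\<close> by (simp add: mult.assoc)
    qed
  next
    case False
    then have Wl: "W \<le> D' * real m powr \<alpha>" using Wb by simp
    show ?thesis
    proof (cases "m' = 0")
      case True
      then have m1: "m = 1" using mm False by auto
      have nn: "n = real k + 2 + c" "n' = real k + c" using m1 True by (auto simp: n_def n'_def)
      have WD: "W \<le> D'" using Wl m1 by simp
      have "lm * n' powr e' \<le> n powr (e' + (\<alpha> + 2 * A1))"
        using nn c al A1 lam e'0 by (intro ratio_aux[where c=c and \<alpha>=\<alpha> and bb=A1]) auto
      also have "e' + (\<alpha> + 2 * A1) = E" using nn by (simp add: E_def e'_def algebra_simps)
      finally have "lm * n' powr e' \<le> n powr E" .
      then have "W * (lm * n' powr e') \<le> D' * n powr E"
        using WD W lam by (intro mono_aux) auto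
      then show ?thesis using True \<open>m \<noteq> 0\<close> by simp
    next
      case False
      have mn: "real m powr \<alpha> \<le> n powr \<alpha>" using al c by (intro powr_mono2) (auto simp: n_def)
      have "n' powr e' \<le> n powr e'" using n1 e'0 by (intro powr_mono2) auto
      have "A1 * n' \<le> A1 * n" using n1 A1 by (intro mult_left_mono) auto
      then have "e' \<le> E - \<alpha>" by (simp add: E_def e'_def algebra_simps)
      then have "n powr e' \<le> n powr (E - \<alpha>)" using n1 by (intro powr_mono) auto
      with \<open>n' powr e' \<le> n powr e'\<close> have a: "n' powr e' \<le> n powr (E - \<alpha>)" by linarith
      have Wl2: "W \<le> D' * n powr \<alpha>" using Wl mn D' by (meson order_trans mult_left_mono less_imp_le)
      have "W * n' powr e' \<le> (D' * n powr \<alpha>) * n powr (E - \<alpha>)"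
        using a Wl2 W by (intro mono_aux) auto
      also have "\<dots> = D' * n powr E" using n1 by (simp add: mult.assoc powr_add[symmetric])
      finally show ?thesis using False \<open>m \<noteq> 0\<close> by simp
    qed
  qed
  have "2 * W * bnd K D' lm c \<alpha> A1 k m' = (K * (2*D')^k * 2) * (W * ((if m' = 0 then lm else 1) * n' powr e'))"
    unfolding bnd_def n'_def e'_def by (simp only: mult_ac)
  also have "\<dots> \<le> (K * (2*D')^k * 2) * (D' * ((if m = 0 then lm else 1) * n powr E))"
    using Q K D' by (intro mult_left_mono) auto
  also have "\<dots> = bnd K D' lm c \<alpha> A1 (Suc k) m"
    unfolding bnd_def n_def E_def by (simp add: mult_ac)
  finally show ?thesis .
qed



lemma wg_facts:
  assumes "weighted_graph adj w mu"
  shows "\<forall>x y. adj x y \<longrightarrow> adj y x" "\<forall>x y. adj\<^sup>*\<^sup>* x y" "\<And>x. finite {y. adj x y}"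
    "\<And>x y. adj x y \<Longrightarrow> w x y > 0" "\<And>x. mu x > 0"
  using assms unfolding weighted_graph_def by auto

lemma wdeg_nonneg: "weighted_graph adj w mu \<Longrightarrow> wdeg adj w mu y \<ge> 0"
  unfolding wdeg_def using wg_facts[of adj w mu]
  by (intro sum_nonneg) (simp add: less_imp_le)

lemma lap_abs:
  assumes G: "weighted_graph adj w mu"
    and nb: "\<And>z. adj y z \<Longrightarrow> 2 * wdeg adj w mu y * \<bar>g z\<bar> \<le> R"
    and self: "2 * wdeg adj w mu y * \<bar>g y\<bar> \<le> R" and R: "R \<ge> 0"
  shows "\<bar>laplacian adj w mu g y\<bar> \<le> R"
proof -
  note f = wg_facts[OF G]
  define W where "W = wdeg adj w mu y"
  have W0: "W \<ge> 0" using wdeg_nonneg[OF G] by (simp add: W_def)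
  have a0: "\<And>z. adj y z \<Longrightarrow> w y z / mu y > 0" using f by auto
  show ?thesis
  proof (cases "W = 0")
    case True
    have "\<forall>z\<in>{z. adj y z}. w y z / mu y = 0"
      using True f(3)[of y] a0 unfolding W_def wdeg_def
      by (subst sum_nonneg_eq_0_iff[symmetric]) (auto simp: less_imp_le)
    then have "{z. adj y z} = {}" using a0 by fastforce
    then show ?thesis using R by (simp add: laplacian_def)
  next
    case False
    then have Wp: "W > 0" using W0 by simp
    define \<beta> where "\<beta> = R / (2 * W)"
    have bz: "\<And>z. adj y z \<Longrightarrow> \<bar>g z\<bar> \<le> \<beta>" using nb Wp unfolding \<beta>_def W_def
      by (simp add: field_simps mult.commute)
    have by': "\<bar>g y\<bar> \<le> \<beta>" using self Wp unfolding \<beta>_def W_def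
      by (simp add: field_simps mult.commute)
    have "\<bar>laplacian adj w mu g y\<bar> \<le> (\<Sum>z\<in>{z. adj y z}. \<bar>w y z / mu y * (g z - g y)\<bar>)"
      unfolding laplacian_def by (rule sum_abs)
    also have "\<dots> \<le> (\<Sum>z\<in>{z. adj y z}. w y z / mu y * (2 * \<beta>))"
    proof (rule sum_mono)
      fix z assume "z \<in> {z. adj y z}"
      then have az: "w y z / mu y > 0" "\<bar>g z\<bar> \<le> \<beta>" using a0 bz by auto
      have "\<bar>g z - g y\<bar> \<le> 2 * \<beta>" using az by' by linarith
      then show "\<bar>w y z / mu y * (g z - g y)\<bar> \<le> w y z / mu y * (2 * \<beta>)"
        using az by (simp only: abs_mult abs_of_pos[OF az(1)] mult_left_mono less_imp_le)
    qed
    also have "\<dots> = 2 * \<beta> * W" unfolding W_def wdeg_def by (simp add: sum_distrib_left mult.commute)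
    also have "\<dots> = R" using Wp by (simp add: \<beta>_def)
    finally show ?thesis .
  qed
qed

lemma bnd_nonneg: "K \<ge> 0 \<Longrightarrow> D' > 0 \<Longrightarrow> lm \<ge> 1 \<Longrightarrow> bnd K D' lm c \<alpha> A1 k m \<ge> 0"
  unfolding bnd_def by (intro mult_nonneg_nonneg) auto

lemma lapk_bound:
  assumes G: "weighted_graph adj w mu"
    and D': "D' > 0" and c: "c \<ge> 1" and lam: "lm \<ge> 1" "lm \<le> c powr (\<alpha> + A1)"
    and al: "\<alpha> \<ge> 0" and A1: "A1 \<ge> 0" and K: "K \<ge> 0"
    and degp: "wdeg adj w mu p \<le> D' * lm"
    and deg: "\<And>y. y \<noteq> p \<Longrightarrow> wdeg adj w mu y \<le> D' * real (gdist adj y p) powr \<alpha>"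
    and base: "\<And>y. \<bar>f y\<bar> \<le> bnd K D' lm c \<alpha> A1 0 (gdist adj y p)"
  shows "\<bar>(laplacian adj w mu ^^ k) f y\<bar> \<le> bnd K D' lm c \<alpha> A1 k (gdist adj y p)"
proof (induction k arbitrary: y)
  case 0
  then show ?case using base by simp
next
  case (Suc k)
  note f = wg_facts[OF G]
  define g where "g = (laplacian adj w mu ^^ k) f"
  define m where "m = gdist adj y p"
  define W where "W = wdeg adj w mu y"
  have W0: "W \<ge> 0" using wdeg_nonneg[OF G] by (simp add: W_def)
  have Wb: "W \<le> (if m = 0 then D' * lm else D' * real m powr \<alpha>)"
  proof (cases "m = 0")
    case True
    then have "y = p" using gdist_0[OF f(2)] by (simp add: m_def)
    then show ?thesis using True degp by (simp add: W_def)
  next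
    case False
    then have "y \<noteq> p" using gdist_0[OF f(2)] by (simp add: m_def)
    then show ?thesis using False deg[of y] by (simp add: W_def m_def)
  qed
  have key: "2 * W * \<bar>g z\<bar> \<le> bnd K D' lm c \<alpha> A1 (Suc k) m"
    if mm: "gdist adj z p \<le> Suc m" "m \<le> Suc (gdist adj z p)" for z
  proof -
    have "2 * W * \<bar>g z\<bar> \<le> 2 * W * bnd K D' lm c \<alpha> A1 k (gdist adj z p)"
      using Suc.IH[of z] W0 by (simp add: g_def mult_left_mono)
    also have "\<dots> \<le> bnd K D' lm c \<alpha> A1 (Suc k) m"
      by (rule key_ineq[OF D' c lam al A1 K W0 mm Wb])
    finally show ?thesis .
  qed
  have "\<bar>laplacian adj w mu g y\<bar> \<le> bnd K D' lm c \<alpha> A1 (Suc k) m"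
  proof (rule lap_abs[OF G])
    fix z assume "adj y z"
    then have "gdist adj z p \<le> Suc m" "m \<le> Suc (gdist adj z p)"
      using gdist_adj[OF f(1) f(2), of y z p] gdist_adj[OF f(1) f(2), of z y p] f(1)
      by (auto simp: m_def)
    then show "2 * wdeg adj w mu y * \<bar>g z\<bar> \<le> bnd K D' lm c \<alpha> A1 (Suc k) m"
      using key W_def by blast
  next
    show "2 * wdeg adj w mu y * \<bar>g y\<bar> \<le> bnd K D' lm c \<alpha> A1 (Suc k) m"
      using key[of y] by (simp add: W_def m_def)
  next
    show "0 \<le> bnd K D' lm c \<alpha> A1 (Suc k) m" using bnd_nonneg K D' lam by blast
  qed
  then show ?case by (simp add: g_def m_def)
qed



lemma powr_split:
  assumes x: "x > 0"
  shows "x powr (\<alpha> * real k + A1 * (real k + \<nu>)) =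
         x powr (A1 * \<nu>) * x ^ (2*k) * (x powr (-(2 - \<alpha> - A1))) ^ k"
proof -
  have "x powr (A1 * \<nu>) * x ^ (2*k) * (x powr (-(2 - \<alpha> - A1))) ^ k =
        x powr (A1 * \<nu>) * x powr (real (2*k)) * x powr (real k * (-(2 - \<alpha> - A1)))"
    using x powr_realpow[OF x, of "2*k"] by (simp add: powr_power)
  also have "\<dots> = x powr (A1 * \<nu> + real (2*k) + real k * (-(2 - \<alpha> - A1)))"
    by (simp add: powr_add)
  also have "A1 * \<nu> + real (2*k) + real k * (-(2 - \<alpha> - A1)) = \<alpha> * real k + A1 * (real k + \<nu>)"
    by (simp add: algebra_simps)
  finally show ?thesis by simp
qed

lemma fact_lower: "real n ^ n / exp (real n) \<le> fact n"
proof -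
  have "real n ^ n / fact n \<le> exp (real n)" by (rule exp_ge_term) simp
  then show ?thesis by (simp add: field_simps)
qed

lemma bracket_bound:
  assumes k: "k \<ge> 1" and D': "D' > 0" and L: "L \<ge> 0" and nu: "\<nu> \<ge> 0"
  shows "(2*D')^k * L^(2*k) * (real k + \<nu>)^(2*k) / fact (2*k)
         \<le> (D' * L^2 * exp 1 ^ 2 / 2) ^ k * exp (2 * \<nu>)"
proof -
  define x where "x = real k + \<nu>"
  have kp: "real k > 0" using k by simp
  have xp: "x > 0" using kp nu by (simp add: x_def)
  define N where "N = (2*D')^k * L^(2*k) * x^(2*k)"
  have N0: "N \<ge> 0" using D' L xp by (simp add: N_def)
  have fl: "real (2*k) ^ (2*k) / exp (real (2*k)) \<le> fact (2*k)" by (rule fact_lower)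
  have pos: "real (2*k) ^ (2*k) / exp (real (2*k)) > 0" using kp by simp
  have "N / fact (2*k) \<le> N / (real (2*k) ^ (2*k) / exp (real (2*k)))"
    using fl pos N0 by (intro divide_left_mono mult_pos_pos) auto
  also have "\<dots> = (D' * L^2 * exp 1 ^ 2 / 2 * (x / real k)^2) ^ k"
  proof -
    have e: "exp (real (2*k)) = (exp 1 ^ 2) ^ k"
      by (simp add: exp_of_nat_mult[symmetric] power_mult[symmetric] mult.commute)
    have "N / (real (2*k) ^ (2*k) / exp (real (2*k))) = N * exp (real (2*k)) / real (2*k) ^ (2*k)"
      by simp
    also have "\<dots> = (2*D')^k * (L^2)^k * (x^2)^k * (exp 1 ^ 2) ^ k / ((2 * real k)^2)^k"
    proof -
      have f4: "(2::real)^(k*2) = 4^k" using power_mult[of "2::real" 2 k] by (simp add: mult.commute)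
      show ?thesis unfolding N_def e by (simp add: power_mult[symmetric] mult.commute f4)
    qed
    also have "\<dots> = (2*D' * L^2 * x^2 * exp 1 ^ 2 / (2 * real k)^2)^k"
    proof -
      have f: "(4::real)^k = 2^k * 2^k" by (simp add: power_mult_distrib[symmetric])
      show ?thesis using kp by (simp add: power_mult_distrib power_divide f field_simps)
    qed
    also have "2*D' * L^2 * x^2 * exp 1 ^ 2 / (2 * real k)^2 = D' * L^2 * exp 1 ^ 2 / 2 * (x / real k)^2"
      using kp by (simp add: field_simps power2_eq_square)
    finally show ?thesis .
  qed
  also have "\<dots> = (D' * L^2 * exp 1 ^ 2 / 2)^k * (x / real k)^(2*k)"
    by (simp only: power_mult_distrib power_mult)
  also have "\<dots> \<le> (D' * L^2 * exp 1 ^ 2 / 2)^k * exp (2 * \<nu>)"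
  proof (rule mult_left_mono)
    have "x / real k = 1 + \<nu> / real k" using kp by (simp add: x_def field_simps)
    also have "\<dots> \<le> exp (\<nu> / real k)" by (rule exp_ge_add_one_self)
    finally have "(x / real k)^(2*k) \<le> exp (\<nu> / real k) ^ (2*k)"
      using xp kp by (intro power_mono) auto
    also have "\<dots> = exp (2 * \<nu>)"
      using kp by (simp add: exp_of_nat_mult[symmetric])
    finally show "(x / real k)^(2*k) \<le> exp (2 * \<nu>)" .
  qed (use D' in simp)
  finally show ?thesis by (simp add: N_def x_def)
qed



lemma poly_geom: "0 < r \<Longrightarrow> r < 1 \<Longrightarrow> ((\<lambda>k. (2*real k+1) * (real k + \<nu>) powr a * r^k) \<longlongrightarrow> 0) at_top"
  by real_asymp

lemma powr_neg_zero: "\<delta> > 0 \<Longrightarrow> ((\<lambda>k. (real k + \<nu>) powr (-\<delta>) * q) \<longlongrightarrow> 0) at_top"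
  by real_asymp

lemma asym:
  assumes K: "K \<ge> 0" and D': "D' > 0" and lam: "lm \<ge> 1" and c: "c \<ge> 1"
    and al: "\<alpha> \<ge> 0" and A1: "A1 \<ge> 0" and s2: "\<alpha> + A1 \<le> 2" and L: "L \<ge> 0"
    and h: "\<alpha> + A1 < 2 \<or> D' * L^2 * exp 1 ^ 2 / 2 < 1"
  shows "(\<lambda>k. (2*real k + 1) * bnd K D' lm c \<alpha> A1 k d0 * L^(2*k) / fact (2*k)) \<longlonglongrightarrow> 0"
proof -
  define \<nu> where "\<nu> = real d0 + c"
  define \<theta> where "\<theta> = (if d0 = 0 then lm else 1)"
  define q where "q = D' * L^2 * exp 1 ^ 2 / 2"
  define \<delta> where "\<delta> = 2 - \<alpha> - A1"
  define C0 where "C0 = K * \<theta> * exp (2 * \<nu>)"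
  have nu: "\<nu> \<ge> 1" using c by (simp add: \<nu>_def)
  have th: "\<theta> > 0" using lam by (simp add: \<theta>_def)
  have q0: "q \<ge> 0" using D' by (simp add: q_def)
  have d0': "\<delta> \<ge> 0" using s2 by (simp add: \<delta>_def)
  obtain r where r: "0 < r" "r < 1" and ev: "eventually (\<lambda>k. (real k + \<nu>) powr (-\<delta>) * q \<le> r) sequentially"
  proof (cases "\<delta> > 0")
    case True
    have "eventually (\<lambda>k. (real k + \<nu>) powr (-\<delta>) * q < 1/2) sequentially"
      using order_tendstoD(2)[OF powr_neg_zero[OF True, of \<nu> q], of "1/2"] by simp
    then show ?thesis by (intro that[of "1/2"]) (auto elim: eventually_mono)
  next
    case False
    then have "\<delta> = 0" using d0' by simp
    then have "q < 1" using h by (simp add: \<delta>_def q_def)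
    have "\<forall>k. (real k + \<nu>) powr (-\<delta>) * q \<le> max q (1/2)" using \<open>\<delta> = 0\<close> nu by simp
    then show ?thesis using \<open>q < 1\<close> by (intro that[of "max q (1/2)"]) auto
  qed
  define g where "g k = C0 * ((2*real k+1) * (real k + \<nu>) powr (A1 * \<nu>) * r^k)" for k
  have g: "g \<longlonglongrightarrow> 0" unfolding g_def by (intro tendsto_mult_right_zero poly_geom r)
  show ?thesis
  proof (rule Lim_null_comparison[OF _ g])
    show "eventually (\<lambda>k. norm ((2*real k + 1) * bnd K D' lm c \<alpha> A1 k d0 * L^(2*k) / fact (2*k)) \<le> g k) sequentially"
      using ev eventually_ge_at_top[of "1::nat"]
    proof eventually_elim
      case (elim k)
      define x where "x = real k + \<nu>"
      have xp: "x > 0" using nu by (simp add: x_def)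
      have b: "bnd K D' lm c \<alpha> A1 k d0 = K * \<theta> * (2*D')^k * x powr (\<alpha> * real k + A1 * (real k + \<nu>))"
        unfolding bnd_def \<theta>_def x_def \<nu>_def by (simp add: algebra_simps)
      have Bb: "(2*D')^k * L^(2*k) * x^(2*k) / fact (2*k) \<le> q ^ k * exp (2 * \<nu>)"
        using bracket_bound[OF elim(2) D' L, of \<nu>] nu by (simp add: x_def q_def)
      have pw: "0 \<le> x powr (-\<delta>)" by simp
      have "(x powr (-\<delta>))^k * q^k \<le> r^k"
        using elim(1) pw q0 by (simp add: power_mult_distrib[symmetric] x_def power_mono)
      have G0: "0 \<le> (2*real k + 1) * bnd K D' lm c \<alpha> A1 k d0 * L^(2*k) / fact (2*k)"
        using bnd_nonneg[OF K D' lam] L by simp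
      have "(2*real k + 1) * bnd K D' lm c \<alpha> A1 k d0 * L^(2*k) / fact (2*k)
            = (2*real k + 1) * K * \<theta> * x powr (A1 * \<nu>) * (x powr (-\<delta>))^k *
              ((2*D')^k * L^(2*k) * x^(2*k) / fact (2*k))"
        unfolding b powr_split[OF xp] \<delta>_def by (simp add: field_simps)
      also have "\<dots> \<le> (2*real k + 1) * K * \<theta> * x powr (A1 * \<nu>) * (x powr (-\<delta>))^k *
              (q ^ k * exp (2 * \<nu>))"
        using Bb K th by (intro mult_left_mono) auto
      also have "\<dots> = C0 * ((2*real k + 1) * x powr (A1 * \<nu>) * ((x powr (-\<delta>))^k * q^k))"
        by (simp add: C0_def field_simps)
      also have "\<dots> \<le> C0 * ((2*real k + 1) * x powr (A1 * \<nu>) * r^k)"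
        using \<open>(x powr (-\<delta>))^k * q^k \<le> r^k\<close> K th
        by (intro mult_left_mono) (auto simp: C0_def)
      finally show ?case using G0 by (simp add: g_def x_def)
    qed
  qed
qed



theorem theorem1p3:
  fixes adj :: "'v \<Rightarrow> 'v \<Rightarrow> bool" and w :: "'v \<Rightarrow> 'v \<Rightarrow> real" and mu :: "'v \<Rightarrow> real"
    and p :: 'v and D \<alpha> C A1 :: real and T :: ereal
    and u u' u'' :: "real \<Rightarrow> 'v \<Rightarrow> real"
  assumes G: "weighted_graph adj w mu"
    and D: "D > 0" and alpha: "0 \<le> \<alpha>" "\<alpha> \<le> 2"
    and deg: "\<And>x. x \<noteq> p \<Longrightarrow> wdeg adj w mu x \<le> D * real (gdist adj x p) powr \<alpha>"
    and T: "T > 0"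
    and d1: "\<And>x t. t \<in> tint T \<Longrightarrow> ((\<lambda>s. u s x) has_real_derivative u' t x) (at t within tint T)"
    and d2: "\<And>x t. t \<in> tint T \<Longrightarrow> ((\<lambda>s. u' s x) has_real_derivative u'' t x) (at t within tint T)"
    and c2: "\<And>x. continuous_on (tint T) (\<lambda>s. u'' s x)"
    and wave: "\<And>x t. t \<in> tint T \<Longrightarrow> u'' t x = laplacian adj w mu (u t) x"
    and Cpos: "C > 0" and A1: "0 \<le> A1" "A1 \<le> 2 - \<alpha>"
    and growth: "\<And>x t. t \<in> tint T \<Longrightarrow> x \<noteq> p \<Longrightarrow>
        \<bar>u t x\<bar> \<le> C * real (gdist adj x p) powr (A1 * real (gdist adj x p))"
  shows "\<forall>x. \<exists>Du :: nat \<Rightarrow> real \<Rightarrow> real.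
           (\<forall>t\<in>tint T. Du 0 t = u t x) \<and>
           (\<forall>n. \<forall>t\<in>tint T. (Du n has_real_derivative Du (Suc n) t) (at t within tint T)) \<and>
           (\<forall>t0\<in>tint T. \<forall>t\<in>tint T.
              (A1 < 2 - \<alpha> \<or> \<bar>t - t0\<bar> < (1 / exp 1) * sqrt (2 / D)) \<longrightarrow>
              (\<lambda>n. Du n t0 / fact n * (t - t0) ^ n) sums u t x)"
proof
  fix x
  define Lp where "Lp = laplacian adj w mu"
  define Du where "Du n t = (if even n then (Lp ^^ (n div 2)) (u t) x else (Lp ^^ (n div 2)) (u' t) x)" for n t
  have Du0: "\<forall>t\<in>tint T. Du 0 t = u t x" by (simp add: Du_def)
  have Dder: "(Du n has_real_derivative Du (Suc n) t) (at t within tint T)" if t: "t \<in> tint T" for n t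
  proof (cases "even n")
    case True
    then have e: "Du n = (\<lambda>s. (Lp ^^ (n div 2)) (u s) x)" by (simp add: Du_def fun_eq_iff)
    have s: "Du (Suc n) t = (Lp ^^ (n div 2)) (u' t) x" using True by (simp add: Du_def)
    show ?thesis unfolding e s Lp_def
      by (intro lapk_deriv d1[OF t])
  next
    case False
    then have e: "Du n = (\<lambda>s. (Lp ^^ (n div 2)) (u' s) x)" by (simp add: Du_def fun_eq_iff)
    have ut: "u'' t = Lp (u t)" using wave[OF t] by (simp add: Lp_def fun_eq_iff)
    have "Du (Suc n) t = (Lp ^^ Suc (n div 2)) (u t) x" using False
      by (simp add: Du_def)
    also have "\<dots> = (Lp ^^ (n div 2)) (u'' t) x" unfolding ut by (simp add: funpow_swap1)
    finally have s: "Du (Suc n) t = (Lp ^^ (n div 2)) (u'' t) x" .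
    show ?thesis unfolding e s Lp_def
      by (intro lapk_deriv d2[OF t])
  qed
  show "\<exists>Du :: nat \<Rightarrow> real \<Rightarrow> real.
           (\<forall>t\<in>tint T. Du 0 t = u t x) \<and>
           (\<forall>n. \<forall>t\<in>tint T. (Du n has_real_derivative Du (Suc n) t) (at t within tint T)) \<and>
           (\<forall>t0\<in>tint T. \<forall>t\<in>tint T.
              (A1 < 2 - \<alpha> \<or> \<bar>t - t0\<bar> < (1 / exp 1) * sqrt (2 / D)) \<longrightarrow>
              (\<lambda>n. Du n t0 / fact n * (t - t0) ^ n) sums u t x)"
  proof (intro exI conjI ballI allI impI)
    show "\<And>t. t \<in> tint T \<Longrightarrow> Du 0 t = u t x" using Du0 by blast
    show "\<And>n t. t \<in> tint T \<Longrightarrow> (Du n has_real_derivative Du (Suc n) t) (at t within tint T)"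
      by (rule Dder)
    fix t0 t
    assume t0: "t0 \<in> tint T" and t: "t \<in> tint T"
      and cond: "A1 < 2 - \<alpha> \<or> \<bar>t - t0\<bar> < (1 / exp 1) * sqrt (2 / D)"
    define a where "a = min t0 t"
    define b where "b = max t0 t"
    define S where "S = {a..b}"
    define L where "L = \<bar>t - t0\<bar>"
    have L0: "L \<ge> 0" by (simp add: L_def)
    have Ssub: "S \<subseteq> tint T"
    proof
      fix \<xi> assume "\<xi> \<in> S"
      then have "a \<le> \<xi>" "\<xi> \<le> b" by (auto simp: S_def)
      moreover have "0 \<le> a" using t0 t by (auto simp: a_def tint_def)
      moreover have "ereal b < T" using t0 t by (auto simp: b_def tint_def max_def)
      ultimately show "\<xi> \<in> tint T" unfolding tint_def
        by (auto intro: le_less_trans[of "ereal \<xi>" "ereal b"])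
    qed
    have t0S: "t0 \<in> S" and tS: "t \<in> S" by (auto simp: S_def a_def b_def)
    have cont: "continuous_on S (\<lambda>s. u s p)"
      by (rule DERIV_continuous_on, rule has_field_derivative_subset[OF d1 Ssub]) (use Ssub in auto)
    obtain Mp where Mp: "\<And>\<xi>. \<xi> \<in> S \<Longrightarrow> \<bar>u \<xi> p\<bar> \<le> Mp"
    proof -
      have "bounded ((\<lambda>s. u s p) ` S)"
        by (rule compact_imp_bounded[OF compact_continuous_image[OF cont]]) (simp add: S_def)
      then obtain B where "\<forall>y\<in>(\<lambda>s. u s p) ` S. norm y \<le> B" by (auto simp: bounded_iff)
      then show ?thesis by (intro that[of B]) auto
    qed
    obtain D' lm c where D'p: "D' > 0" and cp: "c \<ge> 1" and lmp: "lm \<ge> 1" "lm \<le> c powr (\<alpha> + A1)"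
      and degp: "wdeg adj w mu p \<le> D' * lm" and DD: "D \<le> D'"
      and h: "\<alpha> + A1 < 2 \<or> D' * L^2 * exp 1 ^ 2 / 2 < 1"
    proof (cases "A1 < 2 - \<alpha>")
      case True
      show ?thesis
        by (rule that[of "max D (wdeg adj w mu p)" 1 1]) (use True D in auto)
    next
      case False
      then have eq: "\<alpha> + A1 = 2" using A1 by simp
      have Lt: "L < (1 / exp 1) * sqrt (2 / D)" using cond False by (simp add: L_def)
      have "L * exp 1 < sqrt (2 / D)" using Lt by (simp add: field_simps)
      then have "(L * exp 1)^2 < (sqrt (2 / D))^2"
        using L0 by (intro power_strict_mono) auto
      then have "L^2 * exp 1 ^ 2 < 2 / D" using D by (simp add: power_mult_distrib)
      then have hh: "D * L^2 * exp 1 ^ 2 / 2 < 1" using D by (simp add: field_simps)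
      define lm0 where "lm0 = max 1 (wdeg adj w mu p / D)"
      have lm1: "lm0 \<ge> 1" by (simp add: lm0_def)
      have "lm0 \<le> lm0 powr (\<alpha> + A1)" unfolding eq using lm1
        by (simp add: power2_eq_square)
      moreover have "wdeg adj w mu p \<le> D * lm0"
      proof -
        have "wdeg adj w mu p = D * (wdeg adj w mu p / D)" using D by simp
        also have "\<dots> \<le> D * lm0" using D by (intro mult_left_mono) (auto simp: lm0_def)
        finally show ?thesis .
      qed
      ultimately show ?thesis
        by (intro that[of D lm0 lm0]) (use D lm1 hh in auto)
    qed
    define K where "K = max C Mp"
    have K0: "K \<ge> 0" using Cpos by (simp add: K_def)
    define d0 where "d0 = gdist adj x p"
    define Mk where "Mk k = bnd K D' lm c \<alpha> A1 k d0" for k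
    have Mk0: "Mk k \<ge> 0" for k using bnd_nonneg[OF K0 D'p lmp(1)] by (simp add: Mk_def)
    note f = wg_facts[OF G]
    have ub: "\<bar>(Lp ^^ k) (u \<xi>) x\<bar> \<le> Mk k" if xi: "\<xi> \<in> S" for k \<xi>
    proof -
      have xiT: "\<xi> \<in> tint T" using xi Ssub by auto
      have deg': "wdeg adj w mu y \<le> D' * real (gdist adj y p) powr \<alpha>" if "y \<noteq> p" for y
        using deg[OF that] DD by (meson mult_right_mono order_trans powr_ge_zero)
      have base: "\<bar>u \<xi> y\<bar> \<le> bnd K D' lm c \<alpha> A1 0 (gdist adj y p)" for y
      proof (cases "y = p")
        case True
        then have g0: "gdist adj y p = 0" using gdist_0[OF f(2)] by simp
        have "1 \<le> c powr (A1 * c)" using cp A1 by (intro ge_one_powr_ge_zero) auto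
        then have "K \<le> K * lm * c powr (A1 * c)" using K0 lmp
          by (metis mult.right_neutral mult_left_mono mult_mono zero_le_one order_trans)
        moreover have "\<bar>u \<xi> y\<bar> \<le> K" using Mp[OF xi] True by (simp add: K_def)
        ultimately show ?thesis using g0 by (simp add: bnd_def)
      next
        case False
        define m where "m = gdist adj y p"
        have m1: "m \<ge> 1" using False gdist_0[OF f(2), of y p] by (simp add: m_def)
        have "real m powr (A1 * real m) \<le> (real m + c) powr (A1 * real m)"
          using m1 cp A1 by (intro powr_mono2) auto
        also have "\<dots> \<le> (real m + c) powr (A1 * (real m + c))"
          using m1 cp A1 by (intro powr_mono mult_left_mono) auto
        finally have pm: "real m powr (A1 * real m) \<le> (real m + c) powr (A1 * (real m + c))" .
        have "\<bar>u \<xi> y\<bar> \<le> C * real m powr (A1 * real m)" using growth[OF xiT False] by (simp add: m_def)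
        also have "\<dots> \<le> K * (real m + c) powr (A1 * (real m + c))"
          using pm Cpos by (intro mult_mono) (auto simp: K_def)
        finally show ?thesis using m1 by (simp add: bnd_def m_def)
      qed
      show ?thesis unfolding Mk_def d0_def Lp_def
        by (rule lapk_bound[OF G D'p cp lmp alpha(1) A1(1) K0 degp deg' base])
    qed
    have Tk: "\<bar>u t x - (\<Sum>i<2*k. Du i t0 / fact i * (t - t0) ^ i)\<bar> \<le> Mk k * L^(2*k) / fact (2*k - 1)"
      if k1: "k \<ge> 1" for k
    proof -
      have "norm (Du 0 t - (\<Sum>i\<le>2*k-1. Du i t0 * (t - t0) ^ i / fact i))
            \<le> Mk k * norm (t - t0) ^ Suc (2*k-1) / fact (2*k-1)"
      proof (rule field_Taylor[of S "2*k-1" Du "Mk k" t0 t])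
        show "convex S" by (simp add: S_def)
        show "(Du i has_field_derivative Du (Suc i) \<xi>) (at \<xi> within S)" if "\<xi> \<in> S" "i \<le> 2*k-1" for i \<xi>
          using that Ssub by (intro has_field_derivative_subset[OF Dder Ssub]) auto
        show "norm (Du (Suc (2*k-1)) \<xi>) \<le> Mk k" if "\<xi> \<in> S" for \<xi>
          using ub[OF that, of k] k1 by (simp add: Du_def)
      qed (use t0S tS in auto)
      moreover have "{..2*k-1} = {..<2*k}" using k1 by auto
      moreover have "Suc (2*k-1) = 2*k" using k1 by simp
      ultimately show ?thesis using Du0 t by (simp add: L_def mult.commute mult.left_commute)
    qed
    have ak: "\<bar>Du (2*k) t0 / fact (2*k) * (t - t0) ^ (2*k)\<bar> \<le> Mk k * L^(2*k) / fact (2*k)" for k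
    proof -
      have "\<bar>Du (2*k) t0\<bar> \<le> Mk k" using ub[OF t0S, of k] by (simp add: Du_def)
      then show ?thesis by (simp add: L_def abs_mult power_abs divide_right_mono mult_right_mono)
    qed
    define Ebd where "Ebd k = (2 * real k + 1) * Mk k * L^(2*k) / fact (2*k)" for k
    have Elim: "Ebd \<longlonglongrightarrow> 0" unfolding Ebd_def Mk_def
      by (rule asym[OF K0 D'p lmp(1) cp alpha(1) A1(1) _ L0 h]) (use A1 in simp)
    have divlim: "filterlim (\<lambda>N::nat. N div 2) sequentially sequentially"
      unfolding filterlim_at_top
    proof
      fix Z :: nat
      show "eventually (\<lambda>N. Z \<le> N div 2) sequentially"
        using eventually_ge_at_top[of "2*Z"] by eventually_elim auto
    qed
    have Elim2: "(\<lambda>N. Ebd (N div 2)) \<longlonglongrightarrow> 0" by (rule filterlim_compose[OF Elim divlim])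
    have "(\<lambda>N. (\<Sum>i<N. Du i t0 / fact i * (t - t0) ^ i) - u t x) \<longlonglongrightarrow> 0"
    proof (rule Lim_null_comparison[OF _ Elim2])
      show "eventually (\<lambda>N. norm ((\<Sum>i<N. Du i t0 / fact i * (t - t0) ^ i) - u t x) \<le> Ebd (N div 2)) sequentially"
        using eventually_ge_at_top[of "2::nat"]
      proof eventually_elim
        case (elim N)
        define k where "k = N div 2"
        have k1: "k \<ge> 1" using elim by (simp add: k_def)
        define X where "X = Mk k * L^(2*k) / fact (2*k)"
        have X0: "X \<ge> 0" using Mk0 L0 by (simp add: X_def)
        have fr: "fact (2*k) = real (2*k) * fact (2*k - 1)" using k1 fact_reduce[of "2*k"] by simp
        have "Mk k * L^(2*k) / fact (2*k - 1) = real (2*k) * X"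
          unfolding X_def fr using k1 by (simp add: field_simps)
        then have T2: "\<bar>(\<Sum>i<2*k. Du i t0 / fact i * (t - t0) ^ i) - u t x\<bar> \<le> 2 * real k * X"
          using Tk[OF k1] by (simp add: abs_minus_commute)
        show ?case
        proof (cases "even N")
          case True
          then have "N = 2*k" by (simp add: k_def)
          moreover have "Ebd k = (2*real k + 1) * X" by (simp add: Ebd_def X_def)
          ultimately show ?thesis using T2 X0 by (simp add: k_def[symmetric] algebra_simps)
        next
          case False
          then have N: "N = Suc (2*k)" by (simp add: k_def)
          have "\<bar>(\<Sum>i<N. Du i t0 / fact i * (t - t0) ^ i) - u t x\<bar>
              = \<bar>((\<Sum>i<2*k. Du i t0 / fact i * (t - t0) ^ i) - u t x) + Du (2*k) t0 / fact (2*k) * (t - t0) ^ (2*k)\<bar>"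
            unfolding N by simp
          also have "\<dots> \<le> 2 * real k * X + X" using T2 ak[of k] unfolding X_def by linarith
          moreover have "Ebd k = (2*real k + 1) * X" by (simp add: Ebd_def X_def)
          ultimately show ?thesis by (simp add: k_def[symmetric] algebra_simps)
        qed
      qed
    qed
    then show "(\<lambda>n. Du n t0 / fact n * (t - t0) ^ n) sums u t x"
      unfolding sums_def by (rule LIM_zero_cancel)
  qed
qed


end
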